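(* Let $\theta\in[0,1]^V$ be a feasible solution on a unit-weight graph with $n=|V|$ vertices. Then $\|W\theta\|_1\ge n+\|\theta\|_1-\mathsf{OPT}$.
   Context: For a unit-weight graph, $W$ is a symmetric $\{0,1\}$ matrix with $W_{v,v}=1$ (adjacency matrix plus identity). A vector $\theta\in\mathbb{R}_{\ge0}^V$ is feasible if $W\theta\ge\mathbf 1$ coordinatewise. $\mathsf{OPT}=\min\{\|\theta\|_1:\theta\ge0,\ W\theta\ge\mathbf 1\}$. *)

theory Defs
  imports Main "HOL-Analysis.Analysis"
begin

definition unit_weight_matrix :: "('v \<Rightarrow> 'v \<Rightarrow> real) \<Rightarrow> bool" where
  "unit_weight_matrix W \<longleftrightarrow>
     (\<forall>u v. W u v \<in> {0, 1}) \<and> (\<forall>u v. W u v = W v u) \<and> (\<forall>v. W v v = 1)"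

definition matvec :: "('v::finite \<Rightarrow> 'v \<Rightarrow> real) \<Rightarrow> ('v \<Rightarrow> real) \<Rightarrow> 'v \<Rightarrow> real" where
  "matvec W \<theta> u = (\<Sum>v\<in>UNIV. W u v * \<theta> v)"

definition l1norm :: "('v::finite \<Rightarrow> real) \<Rightarrow> real" where
  "l1norm x = (\<Sum>v\<in>UNIV. \<bar>x v\<bar>)"

definition feasible :: "('v::finite \<Rightarrow> 'v \<Rightarrow> real) \<Rightarrow> ('v \<Rightarrow> real) \<Rightarrow> bool" where
  "feasible W \<theta> \<longleftrightarrow> (\<forall>v. \<theta> v \<ge> 0) \<and> (\<forall>u. matvec W \<theta> u \<ge> 1)"

definition OPT :: "('v::finite \<Rightarrow> 'v \<Rightarrow> real) \<Rightarrow> real" where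
  "OPT W = Inf (l1norm ` {\<theta>. feasible W \<theta>})"

end

theory Submission
  imports Defs
begin

lemma cap_feasible:
  fixes W :: "'v::finite \<Rightarrow> 'v \<Rightarrow> real"
  assumes uw: "unit_weight_matrix W" and f: "feasible W \<phi>"
  shows "feasible W (\<lambda>v. min (\<phi> v) 1)"
proof -
  have W01: "\<And>u v. W u v = 0 \<or> W u v = 1" using uw unfolding unit_weight_matrix_def by auto
  have ph0: "\<And>v. \<phi> v \<ge> 0" using f unfolding feasible_def by auto
  have "matvec W (\<lambda>v. min (\<phi> v) 1) u \<ge> 1" for u
  proof (cases "\<exists>v. W u v = 1 \<and> \<phi> v \<ge> 1")
    case True
    then obtain v where v: "W u v = 1" "\<phi> v \<ge> 1" by auto
    have nn: "\<And>w. 0 \<le> W u w * min (\<phi> w) 1"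
      using W01 ph0 by (metis min.absorb_iff2 min_def mult_eq_0_iff mult_nonneg_nonneg order.trans zero_le_one)
    have "W u v * min (\<phi> v) 1 \<le> (\<Sum>w\<in>UNIV. W u w * min (\<phi> w) 1)"
      by (rule member_le_sum) (use nn in auto)
    then show ?thesis using v unfolding matvec_def by simp
  next
    case False
    have "W u w * min (\<phi> w) 1 = W u w * \<phi> w" for w
      using W01[of u w] False by auto
    then have "matvec W (\<lambda>v. min (\<phi> v) 1) u = matvec W \<phi> u" unfolding matvec_def by (intro sum.cong) auto
    then show ?thesis using f unfolding feasible_def by auto
  qed
  then show ?thesis unfolding feasible_def using ph0 by auto
qed

lemma key:
  fixes W :: "'v::finite \<Rightarrow> 'v \<Rightarrow> real"
  assumes uw: "unit_weight_matrix W" and ft: "feasible W \<theta>" and fp: "feasible W \<phi>"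
  shows "real CARD('v) \<le> l1norm \<phi> + (\<Sum>v\<in>UNIV. ((\<Sum>u\<in>UNIV. W u v) - 1) * \<theta> v)"
proof -
  define p where "p = (\<lambda>v. min (\<phi> v) 1)"
  have fp': "feasible W p" unfolding p_def by (rule cap_feasible[OF uw fp])
  have sym: "\<And>u v. W u v = W v u" using uw unfolding unit_weight_matrix_def by auto
  have th0: "\<And>v. \<theta> v \<ge> 0" using ft unfolding feasible_def by auto
  have ph0: "\<And>v. \<phi> v \<ge> 0" using fp unfolding feasible_def by auto
  have p1: "\<And>v. p v \<le> 1" unfolding p_def by auto
  have pphi: "\<And>v. p v \<le> \<phi> v" unfolding p_def by auto
  have Wp: "\<And>v. matvec W p v \<ge> 1" using fp' unfolding feasible_def by auto
  have Wt: "\<And>v. matvec W \<theta> v \<ge> 1" using ft unfolding feasible_def by auto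
  have "(\<Sum>v\<in>UNIV. ((\<Sum>u\<in>UNIV. W u v) - 1) * \<theta> v)
      \<ge> (\<Sum>v\<in>UNIV. ((\<Sum>u\<in>UNIV. W u v) - matvec W p v) * \<theta> v)"
    by (rule sum_mono) (use Wp th0 in \<open>auto intro: mult_right_mono\<close>)
  also have "(\<Sum>v\<in>UNIV. ((\<Sum>u\<in>UNIV. W u v) - matvec W p v) * \<theta> v)
      = (\<Sum>v\<in>UNIV. \<Sum>u\<in>UNIV. W v u * (1 - p u) * \<theta> v)"
    unfolding matvec_def
    by (simp add: sum_subtractf[symmetric] sum_distrib_right sum_distrib_left algebra_simps sym)
  also have "\<dots> = (\<Sum>u\<in>UNIV. \<Sum>v\<in>UNIV. W v u * (1 - p u) * \<theta> v)"
    by (rule sum.swap)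
  also have "\<dots> = (\<Sum>u\<in>UNIV. (1 - p u) * matvec W \<theta> u)"
    unfolding matvec_def by (simp add: sum_distrib_left algebra_simps sym)
  finally have A: "(\<Sum>u\<in>UNIV. (1 - p u) * matvec W \<theta> u) \<le> (\<Sum>v\<in>UNIV. ((\<Sum>u\<in>UNIV. W u v) - 1) * \<theta> v)" .
  have "(\<Sum>u\<in>UNIV. (1 - p u)) \<le> (\<Sum>u\<in>UNIV. (1 - p u) * matvec W \<theta> u)"
  proof (rule sum_mono)
    fix u
    have "(1 - p u) * 1 \<le> (1 - p u) * matvec W \<theta> u"
      by (rule mult_left_mono) (use Wt p1 in auto)
    then show "1 - p u \<le> (1 - p u) * matvec W \<theta> u" by simp
  qed
  moreover have "(\<Sum>u\<in>UNIV. (1 - p u)) = real CARD('v) - (\<Sum>u\<in>UNIV. p u)"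
    by (simp add: sum_subtractf)
  moreover have "(\<Sum>u\<in>UNIV. p u) \<le> l1norm \<phi>"
    unfolding l1norm_def by (rule sum_mono) (use pphi ph0 in auto)
  ultimately show ?thesis using A by linarith
qed

theorem lemma5p8:
  fixes W :: "'v::finite \<Rightarrow> 'v \<Rightarrow> real" and \<theta> :: "'v \<Rightarrow> real"
  assumes "unit_weight_matrix W"
    and "feasible W \<theta>"
    and "\<forall>v. \<theta> v \<le> 1"
  shows "l1norm (matvec W \<theta>) \<ge> real CARD('v) + l1norm \<theta> - OPT W"
proof -
  have W0: "\<And>u v. W u v \<ge> 0" using assms(1) unfolding unit_weight_matrix_def by (metis insert_iff order.refl zero_le_one singletonD)
  have th0: "\<And>v. \<theta> v \<ge> 0" using assms(2) unfolding feasible_def by auto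
  define S where "S = (\<Sum>v\<in>UNIV. ((\<Sum>u\<in>UNIV. W u v) - 1) * \<theta> v)"
  have "l1norm (matvec W \<theta>) = (\<Sum>u\<in>UNIV. \<Sum>v\<in>UNIV. W u v * \<theta> v)"
    unfolding l1norm_def matvec_def
    by (rule sum.cong) (auto intro!: sum_nonneg abs_of_nonneg simp: W0 th0)
  also have "\<dots> = (\<Sum>v\<in>UNIV. \<Sum>u\<in>UNIV. W u v * \<theta> v)" by (rule sum.swap)
  also have "\<dots> = S + l1norm \<theta>"
    unfolding S_def l1norm_def
    by (simp add: sum_distrib_right[symmetric] sum_distrib_left algebra_simps sum.distrib[symmetric] th0)
  finally have E: "l1norm (matvec W \<theta>) = S + l1norm \<theta>" .
  have "real CARD('v) - S \<le> OPT W"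
    unfolding OPT_def
  proof (rule cInf_greatest)
    show "l1norm ` {\<theta>. feasible W \<theta>} \<noteq> {}" using assms(2) by auto
  next
    fix x assume "x \<in> l1norm ` {\<theta>. feasible W \<theta>}"
    then obtain \<phi> where "feasible W \<phi>" "x = l1norm \<phi>" by auto
    then show "real CARD('v) - S \<le> x" using key[OF assms(1,2), of \<phi>] unfolding S_def by linarith
  qed
  then show ?thesis using E by linarith
qed

end
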